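(* Let $\mathfrak N_0=(C_0,A_\zeta,\mathbb X_0,A,B_0;\sigma_1)$ be an invertible node in which $A$ and $A_\zeta$ generate analytic semigroups, let $\sigma_2=\sigma_2^*$ and $\gamma=-\gamma^*$ be $2\times2$ matrices, and let $x_0\in\mathbb R$. Then there exist an interval $\mathrm I$ containing $x_0$ and a vessel $\mathfrak V$ on $\mathrm I$ (with parameters $\sigma_1,\sigma_2,\gamma$ and the same $A,A_\zeta$) which coincides with $\mathfrak N_0$ at $x=x_0$, i.e. $C(x_0)=C_0$, $\mathbb X(x_0)=\mathbb X_0$, $B(x_0)=B_0$.
   Context: A Krein space $\mathcal K$ is a Hilbert space with an extra continuous Hermitian (possibly indefinite) sesquilinear form; adjoints are with respect to it. $\sigma_1$ is an invertible self-adjoint $2\times2$ matrix. A node $(C,A_\zeta,\mathbb X,A,B;\sigma_1)$: bounded $C:\mathcal K\to\mathbb C^2$, $\mathbb X:\mathcal K\to\mathcal K$, $B:\mathbb C^2\to\mathcal K$, and generators $A,A_\zeta$ of strongly continuous groups with common dense domain $D(A)=D(A_\zeta)$, with $\mathbb X(D(A))\subseteq D(A)$ and $A\mathbb Xu+\mathbb XA_\zeta u+B\sigma_1Cu=0$ for $u\in D(A)$; invertible if $\mathbb X$ is boundedly invertible and $\mathbb X^{-1}(D(A))\subseteq D(A)$. A prevessel: fixed $A,A_\zeta$ and bounded operators $C(x),\mathbb X(x),B(x)$, differentiable in $x\in\mathbb R$, each tuple a node, $B(x)\sigma_2e\in D(A)$ for $e\in\mathbb C^2$, and $\partial_xB=-(AB\sigma_2+B\gamma)\sigma_1^{-1}$,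 $\partial_xCu=\sigma_1^{-1}(-\sigma_2CA_\zeta u+\gamma Cu)$ ($u\in D(A)$), $\partial_x\mathbb X=B\sigma_2C$. A vessel on $\Omega\subseteq\mathbb R$: a prevessel with $\mathbb X(x)$ invertible and the node invertible for every $x\in\Omega$, together with $\gamma_*(x)=\gamma+\sigma_2C\mathbb X^{-1}B\sigma_1-\sigma_1C\mathbb X^{-1}B\sigma_2$ on $\Omega$. *)

theory Defs
  imports "HOL-Analysis.Analysis"
begin

text \<open>The complex Hilbert space K is modelled as a real Banach type 'k together with an
explicit complex scalar multiplication sc and an inner product ip (linear in the first
argument) that induces the norm of 'k.\<close>

definition complex_hilbert :: "(complex \<Rightarrow> 'k::banach \<Rightarrow> 'k) \<Rightarrow> ('k \<Rightarrow> 'k \<Rightarrow> complex) \<Rightarrow> bool" where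
  "complex_hilbert sc ip \<longleftrightarrow>
     (\<forall>x. sc 1 x = x) \<and> (\<forall>a b x. sc a (sc b x) = sc (a * b) x) \<and>
     (\<forall>a x y. sc a (x + y) = sc a x + sc a y) \<and> (\<forall>a b x. sc (a + b) x = sc a x + sc b x) \<and>
     (\<forall>r x. sc (complex_of_real r) x = r *\<^sub>R x) \<and>
     (\<forall>x y z. ip (x + y) z = ip x z + ip y z) \<and> (\<forall>a x y. ip (sc a x) y = a * ip x y) \<and>
     (\<forall>x y. ip y x = cnj (ip x y)) \<and> (\<forall>x. ip x x = complex_of_real ((norm x)\<^sup>2))"

definition krein_space :: "(complex \<Rightarrow> 'k::banach \<Rightarrow> 'k) \<Rightarrow> ('k \<Rightarrow> 'k \<Rightarrow> complex) \<Rightarrow> ('k \<Rightarrow> 'k \<Rightarrow> complex) \<Rightarrow> bool" where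
  "krein_space sc ip kf \<longleftrightarrow> complex_hilbert sc ip \<and>
     (\<forall>x y z. kf (x + y) z = kf x z + kf y z) \<and> (\<forall>a x y. kf (sc a x) y = a * kf x y) \<and>
     (\<forall>x y. kf y x = cnj (kf x y)) \<and> (\<exists>M. \<forall>x y. cmod (kf x y) \<le> M * norm x * norm y)"

definition cblin :: "(complex \<Rightarrow> 'a::real_normed_vector \<Rightarrow> 'a) \<Rightarrow> (complex \<Rightarrow> 'b::real_normed_vector \<Rightarrow> 'b) \<Rightarrow> ('a \<Rightarrow> 'b) \<Rightarrow> bool" where
  "cblin sa sb f \<longleftrightarrow> bounded_linear f \<and> (\<forall>a x. f (sa a x) = sb a (f x))"

abbreviation cv :: "complex \<Rightarrow> complex^2 \<Rightarrow> complex^2" where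
  "cv \<equiv> (\<lambda>a v. a *s v)"

definition madj :: "complex^2^2 \<Rightarrow> complex^2^2" where
  "madj M = (\<chi> i j. cnj (M $ j $ i))"

definition group_generator :: "(complex \<Rightarrow> 'k::banach \<Rightarrow> 'k) \<Rightarrow> 'k set \<Rightarrow> ('k \<Rightarrow> 'k) \<Rightarrow> (real \<Rightarrow> 'k \<Rightarrow> 'k) \<Rightarrow> bool" where
  "group_generator sc D A T \<longleftrightarrow>
     (\<forall>t. cblin sc sc (T t)) \<and> T 0 = id \<and> (\<forall>s t. T (s + t) = T s \<circ> T t) \<and>
     (\<forall>x. continuous_on UNIV (\<lambda>t. T t x)) \<and>
     D = {x. \<exists>y. ((\<lambda>t. T t x) has_vector_derivative y) (at 0)} \<and>
     (\<forall>x\<in>D. ((\<lambda>t. T t x) has_vector_derivative A x) (at 0))"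

definition sector :: "real \<Rightarrow> complex set" where
  "sector \<delta> = {z. z = 0 \<or> \<bar>Arg z\<bar> < \<delta>}"

text \<open>The semigroup (T t), t \<ge> 0, is analytic: it extends to an analytic semigroup on a sector
(Pazy, Def. 2.5.1); analyticity is expressed strongly (equivalent to uniform analyticity
for bounded operators).\<close>
definition analytic_semigroup :: "(complex \<Rightarrow> 'k::banach \<Rightarrow> 'k) \<Rightarrow> (real \<Rightarrow> 'k \<Rightarrow> 'k) \<Rightarrow> bool" where
  "analytic_semigroup sc T \<longleftrightarrow> (\<exists>\<delta>>0. \<exists>S.
     (\<forall>t\<ge>0. S (complex_of_real t) = T t) \<and>
     (\<forall>z\<in>sector \<delta>. cblin sc sc (S z)) \<and>
     (\<forall>z1\<in>sector \<delta>. \<forall>z2\<in>sector \<delta>. S (z1 + z2) = S z1 \<circ> S z2) \<and>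
     (\<forall>x. \<forall>z\<in>sector \<delta> - {0}. \<exists>y. ((\<lambda>h. sc (inverse h) (S (z + h) x - S z x)) \<longlongrightarrow> y) (at 0)) \<and>
     (\<forall>x. ((\<lambda>z. S z x) \<longlongrightarrow> x) (at 0 within sector \<delta>)))"

definition node :: "(complex \<Rightarrow> 'k::banach \<Rightarrow> 'k) \<Rightarrow> 'k set \<Rightarrow> ('k \<Rightarrow> 'k) \<Rightarrow> ('k \<Rightarrow> 'k) \<Rightarrow> complex^2^2
     \<Rightarrow> ('k \<Rightarrow> complex^2) \<Rightarrow> ('k \<Rightarrow> 'k) \<Rightarrow> (complex^2 \<Rightarrow> 'k) \<Rightarrow> bool" where
  "node sc D A A\<zeta> \<sigma>1 C X B \<longleftrightarrow>
     cblin sc cv C \<and> cblin sc sc X \<and> cblin cv sc B \<and>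
     (\<exists>T. group_generator sc D A T) \<and> (\<exists>T. group_generator sc D A\<zeta> T) \<and>
     closure D = UNIV \<and> X ` D \<subseteq> D \<and>
     (\<forall>u\<in>D. A (X u) + X (A\<zeta> u) + B (\<sigma>1 *v C u) = 0)"

definition invertible_node :: "(complex \<Rightarrow> 'k::banach \<Rightarrow> 'k) \<Rightarrow> 'k set \<Rightarrow> ('k \<Rightarrow> 'k) \<Rightarrow> ('k \<Rightarrow> 'k) \<Rightarrow> complex^2^2
     \<Rightarrow> ('k \<Rightarrow> complex^2) \<Rightarrow> ('k \<Rightarrow> 'k) \<Rightarrow> (complex^2 \<Rightarrow> 'k) \<Rightarrow> bool" where
  "invertible_node sc D A A\<zeta> \<sigma>1 C X B \<longleftrightarrow> node sc D A A\<zeta> \<sigma>1 C X B \<and>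
     (\<exists>Xi. cblin sc sc Xi \<and> (\<forall>u. Xi (X u) = u) \<and> (\<forall>u. X (Xi u) = u) \<and> Xi ` D \<subseteq> D)"

definition op_has_deriv :: "(real \<Rightarrow> 'a::real_normed_vector \<Rightarrow> 'b::real_normed_vector) \<Rightarrow> ('a \<Rightarrow> 'b) \<Rightarrow> real \<Rightarrow> bool" where
  "op_has_deriv F F' x \<longleftrightarrow> bounded_linear F' \<and>
     ((\<lambda>h. onorm (\<lambda>u. inverse h *\<^sub>R (F (x + h) u - F x u) - F' u)) \<longlongrightarrow> 0) (at 0)"

definition prevessel :: "(complex \<Rightarrow> 'k::banach \<Rightarrow> 'k) \<Rightarrow> 'k set \<Rightarrow> ('k \<Rightarrow> 'k) \<Rightarrow> ('k \<Rightarrow> 'k)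
     \<Rightarrow> complex^2^2 \<Rightarrow> complex^2^2 \<Rightarrow> complex^2^2
     \<Rightarrow> (real \<Rightarrow> 'k \<Rightarrow> complex^2) \<Rightarrow> (real \<Rightarrow> 'k \<Rightarrow> 'k) \<Rightarrow> (real \<Rightarrow> complex^2 \<Rightarrow> 'k) \<Rightarrow> bool" where
  "prevessel sc D A A\<zeta> \<sigma>1 \<sigma>2 \<gamma> C X B \<longleftrightarrow>
     (\<forall>x. node sc D A A\<zeta> \<sigma>1 (C x) (X x) (B x)) \<and>
     (\<forall>x e. B x (\<sigma>2 *v e) \<in> D) \<and>
     (\<forall>x. \<exists>B'. op_has_deriv B B' x \<and>
        (\<forall>e. B' e = - (A (B x (\<sigma>2 *v (matrix_inv \<sigma>1 *v e))) + B x (\<gamma> *v (matrix_inv \<sigma>1 *v e))))) \<and>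
     (\<forall>x. \<exists>C'. op_has_deriv C C' x \<and>
        (\<forall>u\<in>D. C' u = matrix_inv \<sigma>1 *v (- (\<sigma>2 *v C x (A\<zeta> u)) + \<gamma> *v C x u))) \<and>
     (\<forall>x. op_has_deriv X (\<lambda>u. B x (\<sigma>2 *v C x u)) x)"

definition vessel :: "(complex \<Rightarrow> 'k::banach \<Rightarrow> 'k) \<Rightarrow> 'k set \<Rightarrow> ('k \<Rightarrow> 'k) \<Rightarrow> ('k \<Rightarrow> 'k)
     \<Rightarrow> complex^2^2 \<Rightarrow> complex^2^2 \<Rightarrow> complex^2^2 \<Rightarrow> real set
     \<Rightarrow> (real \<Rightarrow> 'k \<Rightarrow> complex^2) \<Rightarrow> (real \<Rightarrow> 'k \<Rightarrow> 'k) \<Rightarrow> (real \<Rightarrow> complex^2 \<Rightarrow> 'k) \<Rightarrow> bool" where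
  "vessel sc D A A\<zeta> \<sigma>1 \<sigma>2 \<gamma> \<Omega> C X B \<longleftrightarrow>
     prevessel sc D A A\<zeta> \<sigma>1 \<sigma>2 \<gamma> C X B \<and>
     (\<forall>x\<in>\<Omega>. invertible_node sc D A A\<zeta> \<sigma>1 (C x) (X x) (B x))"

end

theory Submission
  imports Defs "HOL-Analysis.Analysis"
begin

typedef (overloaded) 'a endo = "UNIV :: (('a::real_normed_vector \<times> real) \<Rightarrow>\<^sub>L ('a \<times> real)) set"
  morphisms Rep_endo Abs_endo by auto

setup_lifting type_definition_endo

instantiation endo :: (real_normed_vector) real_normed_algebra_1
begin
lift_definition zero_endo :: "'a endo" is 0 .
lift_definition one_endo :: "'a endo" is id_blinfun .
lift_definition plus_endo :: "'a endo \<Rightarrow> 'a endo \<Rightarrow> 'a endo" is "(+)" .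
lift_definition minus_endo :: "'a endo \<Rightarrow> 'a endo \<Rightarrow> 'a endo" is "(-)" .
lift_definition uminus_endo :: "'a endo \<Rightarrow> 'a endo" is "uminus" .
lift_definition times_endo :: "'a endo \<Rightarrow> 'a endo \<Rightarrow> 'a endo" is "(o\<^sub>L)" .
lift_definition scaleR_endo :: "real \<Rightarrow> 'a endo \<Rightarrow> 'a endo" is "(*\<^sub>R)" .
lift_definition norm_endo :: "'a endo \<Rightarrow> real" is norm .
definition dist_endo :: "'a endo \<Rightarrow> 'a endo \<Rightarrow> real" where "dist_endo a b = norm (a - b)"
definition sgn_endo :: "'a endo \<Rightarrow> 'a endo" where "sgn_endo x = scaleR (inverse (norm x)) x"
definition uniformity_endo :: "('a endo \<times> 'a endo) filter" where
  "uniformity_endo = (INF e\<in>{0 <..}. principal {(x, y). dist x y < e})"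
definition open_endo :: "'a endo set \<Rightarrow> bool" where
  "open_endo S = (\<forall>x\<in>S. \<forall>\<^sub>F (x', y) in uniformity. x' = x \<longrightarrow> y \<in> S)"

lemma norm_id_prod: "norm (id_blinfun :: ('a \<times> real) \<Rightarrow>\<^sub>L ('a \<times> real)) = 1"
proof (rule antisym)
  show "norm (id_blinfun :: ('a \<times> real) \<Rightarrow>\<^sub>L ('a \<times> real)) \<le> 1" by (rule norm_blinfun_id_le)
  have "norm (blinfun_apply (id_blinfun :: ('a \<times> real) \<Rightarrow>\<^sub>L ('a \<times> real)) (0,1)) \<le> norm (id_blinfun :: ('a \<times> real) \<Rightarrow>\<^sub>L ('a \<times> real)) * norm ((0::'a),(1::real))"
    by (rule norm_blinfun)
  then show "1 \<le> norm (id_blinfun :: ('a \<times> real) \<Rightarrow>\<^sub>L ('a \<times> real))"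
    by (simp add: norm_Pair)
qed

instance
proof
  fix a b c :: "'a endo" and r s :: real
  show "a * b * c = a * (b * c)" by transfer (auto intro!: blinfun_eqI)
  show "1 * a = a" by transfer (auto intro!: blinfun_eqI)
  show "a * 1 = a" by transfer (auto intro!: blinfun_eqI)
  show "(a + b) * c = a * c + b * c" by transfer (auto intro!: blinfun_eqI simp: blinfun.bilinear_simps)
  show "a * (b + c) = a * b + a * c" by transfer (auto intro!: blinfun_eqI simp: blinfun.bilinear_simps)
  show "(0::'a endo) \<noteq> 1" by transfer (metis norm_id_prod norm_zero zero_neq_one)
  show "a + b + c = a + (b + c)" by transfer simp
  show "a + b = b + a" by transfer simp
  show "0 + a = a" by transfer simp
  show "- a + a = 0" by transfer simp
  show "a - b = a + - b" by transfer simp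
  show "r *\<^sub>R (a + b) = r *\<^sub>R a + r *\<^sub>R b" by transfer (simp add: scaleR_add_right)
  show "(r + s) *\<^sub>R a = r *\<^sub>R a + s *\<^sub>R a" by transfer (simp add: scaleR_add_left)
  show "r *\<^sub>R s *\<^sub>R a = (r * s) *\<^sub>R a" by transfer simp
  show "1 *\<^sub>R a = a" by transfer simp
  show "r *\<^sub>R a * b = r *\<^sub>R (a * b)" by transfer (auto intro!: blinfun_eqI simp: blinfun.bilinear_simps)
  show "a * r *\<^sub>R b = r *\<^sub>R (a * b)" by transfer (auto intro!: blinfun_eqI simp: blinfun.bilinear_simps)
  show "norm (a * b) \<le> norm a * norm b" by transfer (rule norm_blinfun_compose)
  show "norm (1::'a endo) = 1" by transfer (rule norm_id_prod)
  show "dist a b = norm (a - b)" by (simp add: dist_endo_def)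
  show "sgn a = inverse (norm a) *\<^sub>R a" by (simp add: sgn_endo_def)
  show "(norm a = 0) = (a = 0)" by transfer simp
  show "norm (a + b) \<le> norm a + norm b" by transfer (rule norm_triangle_ineq)
  show "norm (r *\<^sub>R a) = \<bar>r\<bar> * norm a" by transfer simp
  show "(uniformity :: ('a endo \<times> 'a endo) filter) = (INF e\<in>{0 <..}. principal {(x, y). dist x y < e})"
    by (simp add: uniformity_endo_def)
  fix U :: "'a endo set"
  show "open U = (\<forall>x\<in>U. \<forall>\<^sub>F (x', y) in uniformity. x' = x \<longrightarrow> y \<in> U)"
    by (simp add: open_endo_def)
qed
end

lemma norm_Rep_endo: "norm (Rep_endo a) = norm a" by transfer simp
lemma Rep_endo_diff: "Rep_endo (a - b) = Rep_endo a - Rep_endo b" by transfer simp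

instance endo :: (banach) banach
proof
  fix X :: "nat \<Rightarrow> 'a endo"
  assume "Cauchy X"
  then have "Cauchy (\<lambda>n. Rep_endo (X n))"
    by (simp add: Cauchy_def dist_norm norm_Rep_endo flip: Rep_endo_diff)
  then obtain L where "(\<lambda>n. Rep_endo (X n)) \<longlonglongrightarrow> L" using convergent_def Cauchy_convergent_iff by blast
  then have "X \<longlonglongrightarrow> Abs_endo L"
    unfolding LIMSEQ_iff
    by (metis Abs_endo_inverse Rep_endo_diff UNIV_I norm_Rep_endo)
  then show "convergent X" by (auto simp: convergent_def)
qed

lemma lin_ode_exists:
  fixes L :: "'v::banach \<Rightarrow>\<^sub>L 'v" and P :: "'v set" and t0 :: real
  assumes P: "closed P" "v0 \<in> P" "\<And>x y. x\<in>P \<Longrightarrow> y\<in>P \<Longrightarrow> x+y\<in>P"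
     "\<And>r x. x\<in>P \<Longrightarrow> r *\<^sub>R x \<in> P" "\<And>x. x\<in>P \<Longrightarrow> L x \<in> P"
  shows "\<exists>y. y t0 = v0 \<and> (\<forall>t. (y has_vector_derivative L (y t)) (at t)) \<and> (\<forall>t. y t \<in> P)"
proof -
  define Lp :: "('v \<times> real) \<Rightarrow>\<^sub>L ('v \<times> real)" where "Lp = Blinfun (\<lambda>p. (L (fst p), 0))"
  have blLp: "bounded_linear (\<lambda>p::'v\<times>real. (L (fst p), (0::real)))"
    by (intro bounded_linear_Pair bounded_linear_compose[OF blinfun.bounded_linear_right] bounded_linear_fst bounded_linear_zero)
  have Lp_apply: "blinfun_apply Lp p = (L (fst p), 0)" for p
    unfolding Lp_def using bounded_linear_Blinfun_apply[OF blLp] by simp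
  define A :: "'v endo" where "A = Abs_endo Lp"
  have RepA: "Rep_endo A = Lp" unfolding A_def by (simp add: Abs_endo_inverse)
  define Phi :: "'v endo \<Rightarrow> 'v" where "Phi e = fst (blinfun_apply (Rep_endo e) (v0, 0))" for e
  have blPhi: "bounded_linear Phi"
  proof -
    have "bounded_linear (\<lambda>e::'v endo. Rep_endo e)"
      by (rule bounded_linear_intro[where K=1]; transfer; simp)
    then have "bounded_linear (\<lambda>e::'v endo. blinfun_apply (Rep_endo e) (v0, 0))"
      using bounded_linear_compose[OF blinfun.bounded_linear_left] by blast
    then show ?thesis unfolding Phi_def using bounded_linear_compose[OF bounded_linear_fst] by blast
  qed
  interpret Phi: bounded_linear Phi by (rule blPhi)
  define y where "y t = Phi (exp ((t - t0) *\<^sub>R A))" for t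
  have "y t0 = Phi 1" by (simp add: y_def)
  also have "Phi 1 = v0" unfolding Phi_def by transfer simp
  finally have y0: "y t0 = v0" .
  have der: "(y has_vector_derivative L (y t)) (at t)" for t
  proof -
    have d1: "((\<lambda>t. t - t0) has_vector_derivative 1) (at t)"
      by (auto intro!: derivative_eq_intros)
    have "((\<lambda>s. exp (s *\<^sub>R A)) \<circ> (\<lambda>t. t - t0) has_vector_derivative (1 *\<^sub>R (A * exp ((t - t0) *\<^sub>R A)))) (at t)"
      by (rule vector_diff_chain_at[OF d1 exp_scaleR_has_vector_derivative_left])
    then have "((\<lambda>t. Phi (exp ((t - t0) *\<^sub>R A))) has_vector_derivative Phi (A * exp ((t - t0) *\<^sub>R A))) (at t)"
      using Phi.has_vector_derivative by (simp add: o_def)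
    moreover have "Phi (A * exp ((t - t0) *\<^sub>R A)) = L (y t)"
      unfolding y_def Phi_def by (simp add: times_endo.rep_eq RepA Lp_apply)
    ultimately show ?thesis unfolding y_def by simp
  qed
  have pow0: "blinfun_apply (Rep_endo (A ^ n)) (v, 0) = ((blinfun_apply L ^^ n) v, 0)" for n v
  proof (induction n)
    case 0 then show ?case by (simp add: one_endo.rep_eq)
  next
    case (Suc n)
    have "A ^ Suc n = A * A ^ n" by simp
    then show ?case
      by (simp only: times_endo.rep_eq RepA blinfun_apply_blinfun_compose Suc Lp_apply) simp
  qed
  have pow: "blinfun_apply (Rep_endo ((s *\<^sub>R A) ^ n)) (v, 0) = (s ^ n *\<^sub>R (blinfun_apply L ^^ n) v, 0)" for s n v
    by (simp add: scaleR_endo.rep_eq pow0 blinfun.scaleR_left)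
  have inP: "y t \<in> P" for t
  proof -
    let ?x = "(t - t0) *\<^sub>R A"
    have "(\<lambda>n. ?x ^ n /\<^sub>R fact n) sums exp ?x"
      unfolding exp_def by (rule summable_sums[OF summable_exp_generic])
    then have "(\<lambda>n. Phi (?x ^ n /\<^sub>R fact n)) sums y t"
      unfolding y_def by (rule Phi.sums)
    then have lim: "(\<lambda>n. \<Sum>i<n. Phi (?x ^ i /\<^sub>R fact i)) \<longlonglongrightarrow> y t" by (simp add: sums_def)
    have 0: "0 \<in> P" using P(4)[OF P(2), of 0] by simp
    have Ln: "(blinfun_apply L ^^ n) v0 \<in> P" for n
      by (induction n) (auto simp: P)
    have trm: "Phi (?x ^ i /\<^sub>R fact i) \<in> P" for i
    proof -
      have "Phi (?x ^ i /\<^sub>R fact i) = (1 / fact i) *\<^sub>R Phi (?x ^ i)"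
        by (simp add: Phi.scaleR divide_inverse_commute)
      also have "Phi (?x ^ i) = ((t - t0) ^ i) *\<^sub>R (blinfun_apply L ^^ i) v0"
        unfolding Phi_def using pow[of "t - t0" i v0] by simp
      finally show ?thesis using P(4) Ln by simp
    qed
    have "(\<Sum>i<n. Phi (?x ^ i /\<^sub>R fact i)) \<in> P" for n
    proof (induction n)
      case (Suc n) then show ?case unfolding sum.lessThan_Suc by (rule P(3)[OF _ trm])
    qed (simp add: 0)
    then show ?thesis using closed_sequentially[OF P(1) _ lim] by blast
  qed
  show ?thesis using y0 der inP by blast
qed

lemma zero_deriv_const:
  fixes f :: "real \<Rightarrow> 'b::real_normed_vector"
  assumes "\<And>t. (f has_vector_derivative 0) (at t)"
  shows "f t = f s"
proof -
  have "\<exists>c. \<forall>x\<in>UNIV. f x = c"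
    by (rule has_derivative_zero_constant[of UNIV])
       (use assms in \<open>auto simp: has_vector_derivative_def\<close>)
  then show ?thesis by auto
qed

lemma primitive_exists:
  fixes g :: "real \<Rightarrow> 'v::banach"
  assumes "continuous_on UNIV g"
  shows "\<exists>F. F t0 = v0 \<and> (\<forall>t. (F has_vector_derivative g t) (at t))"
proof -
  define F where "F t = v0 + integral {t0..t} g - integral {t..t0} g" for t
  have "(F has_vector_derivative g t) (at t)" for t
  proof -
    define a where "a = min t t0 - 1"
    define b where "b = max t t0 + 1"
    have cg: "continuous_on {a..b} g" using assms continuous_on_subset by blast
    have intall: "\<And>c d. g integrable_on {c..d}"
      by (rule integrable_continuous_real) (rule continuous_on_subset[OF assms], simp)
    have eq: "F s = v0 + integral {a..s} g - integral {a..t0} g" if "s \<in> {a<..<b}" for s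
    proof (cases "t0 \<le> s")
      case True
      have "integral {a..t0} g + integral {t0..s} g = integral {a..s} g"
        using Henstock_Kurzweil_Integration.integral_combine[where a=a and c=t0 and b=s and f=g] True that intall
        by (auto simp: a_def)
      moreover have "integral {s..t0} g = 0"
        using True by (cases "s = t0") auto
      ultimately show ?thesis unfolding F_def by (simp add: algebra_simps)
    next
      case False
      have "integral {a..s} g + integral {s..t0} g = integral {a..t0} g"
        using Henstock_Kurzweil_Integration.integral_combine[where a=a and c=s and b=t0 and f=g] False that intall
        by (auto simp: a_def b_def)
      moreover have "integral {t0..s} g = 0"
        using False by auto
      ultimately show ?thesis unfolding F_def by (simp add: algebra_simps)
    qed
    have "((\<lambda>u. integral {a..u} g) has_vector_derivative g t) (at t within {a..b})"
      by (rule integral_has_vector_derivative[OF cg]) (auto simp: a_def b_def)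
    then have "((\<lambda>u. integral {a..u} g) has_vector_derivative g t) (at t within {a<..<b})"
      by (rule has_vector_derivative_within_subset) auto
    then have "((\<lambda>u. integral {a..u} g) has_vector_derivative g t) (at t)"
      by (subst (asm) has_vector_derivative_within_open) (auto simp: a_def b_def)
    then have "((\<lambda>u. v0 + integral {a..u} g - integral {a..t0} g) has_vector_derivative g t) (at t)"
      by (auto intro!: derivative_eq_intros)
    then show ?thesis
      by (rule has_vector_derivative_transform_within_open[of _ _ _ "{a<..<b}"])
         (auto simp: a_def b_def eq)
  qed
  moreover have "F t0 = v0" by (simp add: F_def)
  ultimately show ?thesis by blast
qed

lemma op_deriv_of_blinfun:
  fixes F :: "real \<Rightarrow> 'a::real_normed_vector \<Rightarrow>\<^sub>L 'b::real_normed_vector"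
  assumes "(F has_vector_derivative F') (at x)"
  shows "op_has_deriv (\<lambda>t. blinfun_apply (F t)) (blinfun_apply F') x"
proof -
  have "((\<lambda>h. norm (F (x + h) - F x - h *\<^sub>R F') / norm h) \<longlongrightarrow> 0) (at 0)"
    using assms by (simp add: has_vector_derivative_def has_derivative_at)
  moreover have "norm (F (x + h) - F x - h *\<^sub>R F') / norm h =
      onorm (\<lambda>u. inverse h *\<^sub>R (F (x + h) u - F x u) - F' u)" if "h \<noteq> 0" for h
  proof -
    have "onorm (\<lambda>u. inverse h *\<^sub>R (F (x + h) u - F x u) - F' u) =
          norm (inverse h *\<^sub>R (F (x + h) - F x) - F')"
    proof -
      have "blinfun_apply (inverse h *\<^sub>R (F (x + h) - F x) - F') = (\<lambda>u. inverse h *\<^sub>R (F (x + h) u - F x u) - F' u)"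
        by (rule ext) (simp add: blinfun.bilinear_simps)
      then show ?thesis by (simp add: norm_blinfun.rep_eq)
    qed
    also have "inverse h *\<^sub>R (F (x + h) - F x) - F' = inverse h *\<^sub>R (F (x + h) - F x - h *\<^sub>R F')"
      using that by (simp add: algebra_simps)
    also have "norm \<dots> = norm (F (x + h) - F x - h *\<^sub>R F') / norm h"
      by (simp add: divide_inverse_commute)
    finally show ?thesis by simp
  qed
  ultimately have "((\<lambda>h. onorm (\<lambda>u. inverse h *\<^sub>R (F (x + h) u - F x u) - F' u)) \<longlongrightarrow> 0) (at 0)"
  proof -
    assume lim: "((\<lambda>h. norm (F (x + h) - F x - h *\<^sub>R F') / norm h) \<longlongrightarrow> 0) (at 0)"
      and eq: "\<And>h. h \<noteq> 0 \<Longrightarrow> norm (F (x + h) - F x - h *\<^sub>R F') / norm h =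
      onorm (\<lambda>u. inverse h *\<^sub>R (F (x + h) u - F x u) - F' u)"
    have "\<forall>\<^sub>F h in at 0. norm (F (x + h) - F x - h *\<^sub>R F') / norm h =
      onorm (\<lambda>u. inverse h *\<^sub>R (F (x + h) u - F x u) - F' u)"
    proof -
      have "\<forall>\<^sub>F h in at (0::real). h \<noteq> 0" by (simp add: eventually_at_filter)
      then show ?thesis by (rule eventually_mono) (rule eq)
    qed
    then show ?thesis using tendsto_cong lim by fastforce
  qed
  then show ?thesis unfolding op_has_deriv_def by (simp add: blinfun.bounded_linear_right)
qed

lemma vderiv_iff_quot:
  fixes f :: "real \<Rightarrow> 'b::real_normed_vector"
  shows "(f has_vector_derivative y) (at x) \<longleftrightarrow> ((\<lambda>h. inverse h *\<^sub>R (f (x + h) - f x)) \<longlongrightarrow> y) (at 0)"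
proof -
  have "(f has_vector_derivative y) (at x) \<longleftrightarrow>
       ((\<lambda>h. norm (f (x + h) - f x - h *\<^sub>R y) / norm h) \<longlongrightarrow> 0) (at 0)"
    by (simp add: has_vector_derivative_def has_derivative_at bounded_linear_scaleR_left)
  also have "\<dots> \<longleftrightarrow> ((\<lambda>h. norm (inverse h *\<^sub>R (f (x + h) - f x) - y)) \<longlongrightarrow> 0) (at 0)"
  proof (rule tendsto_cong)
    have "\<forall>\<^sub>F h in at (0::real). h \<noteq> 0" by (simp add: eventually_at_filter)
    then show "\<forall>\<^sub>F h in at 0. norm (f (x + h) - f x - h *\<^sub>R y) / norm h =
        norm (inverse h *\<^sub>R (f (x + h) - f x) - y)"
    proof (rule eventually_mono)
      fix h :: real assume h: "h \<noteq> 0"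
      have "inverse h *\<^sub>R (f (x + h) - f x) - y = inverse h *\<^sub>R (f (x + h) - f x - h *\<^sub>R y)"
        using h by (simp add: algebra_simps)
      then show "norm (f (x + h) - f x - h *\<^sub>R y) / norm h = norm (inverse h *\<^sub>R (f (x + h) - f x) - y)"
        by (simp add: divide_inverse_commute)
    qed
  qed
  also have "\<dots> \<longleftrightarrow> ((\<lambda>h. inverse h *\<^sub>R (f (x + h) - f x)) \<longlongrightarrow> y) (at 0)"
    by (simp add: tendsto_norm_zero_iff LIM_zero_iff)
  finally show ?thesis .
qed

lemma sc_bl:
  assumes "complex_hilbert sc ip"
  shows "bounded_linear (sc a)"
proof (rule bounded_linear_intro[where K="cmod a"])
  note H = assms[unfolded complex_hilbert_def]
  fix x y :: 'a and r :: real
  show "sc a (x + y) = sc a x + sc a y" using H by blast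
  have rr: "\<And>v. r *\<^sub>R v = sc (complex_of_real r) v" using H by simp
  have "sc a (r *\<^sub>R x) = sc a (sc (complex_of_real r) x)" by (simp only: rr)
  also have "\<dots> = sc (complex_of_real r) (sc a x)"
  proof -
    have comp: "\<And>a b x. sc a (sc b x) = sc (a*b) x" using H by blast
    show ?thesis by (subst comp, subst comp, rule arg_cong[where f="\<lambda>c. sc c x"], rule mult.commute)
  qed
  also have "\<dots> = r *\<^sub>R sc a x" by (simp only: rr)
  finally show "sc a (r *\<^sub>R x) = r *\<^sub>R sc a x" .
  have ipxx: "\<And>x. ip x x = complex_of_real ((norm x)\<^sup>2)" using H by blast
  have ipsc: "\<And>a x y. ip (sc a x) y = a * ip x y" using H by blast
  have ipc: "\<And>x y. ip y x = cnj (ip x y)" using H by blast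
  have "complex_of_real ((norm (sc a x))\<^sup>2) = ip (sc a x) (sc a x)" by (rule ipxx[symmetric])
  also have "\<dots> = a * ip x (sc a x)" by (rule ipsc)
  also have "ip x (sc a x) = cnj (ip (sc a x) x)" by (rule ipc)
  also have "ip (sc a x) x = a * ip x x" by (rule ipsc)
  also have "ip x x = complex_of_real ((norm x)\<^sup>2)" by (rule ipxx)
  also have "a * cnj (a * complex_of_real ((norm x)\<^sup>2)) = complex_of_real ((cmod a * norm x)\<^sup>2)"
  proof -
    have "a * cnj (a * complex_of_real ((norm x)\<^sup>2)) = (a * cnj a) * complex_of_real ((norm x)\<^sup>2)"
      by (simp add: mult.assoc)
    also have "a * cnj a = complex_of_real ((cmod a)\<^sup>2)" by (rule complex_norm_square[symmetric])
    finally show ?thesis by (simp add: power_mult_distrib)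
  qed
  finally have "(norm (sc a x))\<^sup>2 = (cmod a * norm x)\<^sup>2" using of_real_eq_iff by blast
  then have "norm (sc a x) = cmod a * norm x" using power2_eq_iff_nonneg by fastforce
  then show "norm (sc a x) \<le> norm x * cmod a" by (simp add: mult.commute)
qed

lemma gen_facts:
  fixes sc :: "complex \<Rightarrow> 'k::banach \<Rightarrow> 'k"
  assumes H: "complex_hilbert sc ip"
    and G: "group_generator sc D A T" and AN: "analytic_semigroup sc T"
  shows "D = UNIV" "bounded_linear A" "\<And>a x. A (sc a x) = sc a (A x)"
    "\<And>x. ((\<lambda>t. T t x) has_vector_derivative A x) (at 0)"
proof -
  note G' = G[unfolded group_generator_def cblin_def]
  have Tbl: "bounded_linear (T t)" for t using G' by blast
  have Tsc: "T t (sc a x) = sc a (T t x)" for t a x using G' by blast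
  have T0: "T 0 = id" using G' by blast
  have Tadd: "T (s + t) = T s \<circ> T t" for s t using G' by blast
  have Tcont: "continuous_on UNIV (\<lambda>t. T t x)" for x using G' by blast
  have Ddef: "D = {x. \<exists>y. ((\<lambda>t. T t x) has_vector_derivative y) (at 0)}" using G' by blast
  have DA: "x \<in> D \<Longrightarrow> ((\<lambda>t. T t x) has_vector_derivative A x) (at 0)" for x using G' by blast
  obtain \<delta> S where d: "\<delta> > 0" and ST: "\<And>t. t \<ge> 0 \<Longrightarrow> S (complex_of_real t) = T t"
    and Sd: "\<And>x. \<forall>z\<in>sector \<delta> - {0}. \<exists>y. ((\<lambda>h. sc (inverse h) (S (z + h) x - S z x)) \<longlongrightarrow> y) (at 0)"
    using AN unfolding analytic_semigroup_def by blast
  have one: "1 \<in> sector \<delta> - {0}" using d by (simp add: sector_def)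
  have T1D: "T 1 x \<in> D" for x
  proof -
    obtain y where y: "((\<lambda>h. sc (inverse h) (S (1 + h) x - S 1 x)) \<longlongrightarrow> y) (at 0)"
      using Sd one by blast
    have fl: "filterlim complex_of_real (at 0) (at (0::real))"
      by (rule filterlim_atI) (auto intro!: tendsto_eq_intros simp: eventually_at_filter)
    have lim: "((\<lambda>h::real. sc (inverse (complex_of_real h)) (S (1 + complex_of_real h) x - S 1 x)) \<longlongrightarrow> y) (at 0)"
      using filterlim_compose[OF y fl] .
    have "\<forall>\<^sub>F h in at (0::real). \<bar>h\<bar> < 1"
      by (rule eventually_at_ball'[of 1 0 UNIV, THEN eventually_mono]) (auto simp: dist_real_def)
    then have ev: "\<forall>\<^sub>F h in at (0::real). sc (inverse (complex_of_real h)) (S (1 + complex_of_real h) x - S 1 x)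
        = inverse h *\<^sub>R (T h (T 1 x) - T 0 (T 1 x))"
    proof (rule eventually_mono)
      fix h :: real assume "\<bar>h\<bar> < 1"
      then have "S (1 + complex_of_real h) = T (h + 1)" using ST[of "1 + h"] by (simp add: add.commute)
      moreover have "S 1 = T 1" using ST[of 1] by simp
      moreover have "sc (inverse (complex_of_real h)) v = inverse h *\<^sub>R v" for v
        using H unfolding complex_hilbert_def by (metis of_real_inverse)
      ultimately show "sc (inverse (complex_of_real h)) (S (1 + complex_of_real h) x - S 1 x)
        = inverse h *\<^sub>R (T h (T 1 x) - T 0 (T 1 x))" by (simp add: Tadd T0)
    qed
    have "((\<lambda>h. inverse h *\<^sub>R (T (0 + h) (T 1 x) - T 0 (T 1 x))) \<longlongrightarrow> y) (at 0)"
      using tendsto_cong[OF ev] lim by simp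
    then have "((\<lambda>t. T t (T 1 x)) has_vector_derivative y) (at 0)"
      by (simp add: vderiv_iff_quot)
    then show ?thesis using Ddef by blast
  qed
  show DU: "D = UNIV"
  proof (intro set_eqI iffI)
    fix x
    have "T 1 (T (-1) x) = x" using Tadd[of 1 "-1"] T0 by (metis comp_apply add.right_inverse id_apply)
    then show "x \<in> D" using T1D by metis
  qed simp
  show der: "((\<lambda>t. T t x) has_vector_derivative A x) (at 0)" for x using DA DU by blast
  have Aadd: "A (x + y) = A x + A y" for x y
  proof -
    have "((\<lambda>t. T t x + T t y) has_vector_derivative A x + A y) (at 0)"
      using der[of x] der[of y] by (rule has_vector_derivative_add)
    moreover have "(\<lambda>t. T t (x + y)) = (\<lambda>t. T t x + T t y)" using Tbl by (simp add: linear_simps)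
    ultimately show ?thesis using der[of "x+y"] vector_derivative_unique_at by metis
  qed
  have Asc: "A (sc a x) = sc a (A x)" for a x
  proof -
    interpret s: bounded_linear "sc a" by (rule sc_bl[OF H])
    have "((\<lambda>t. sc a (T t x)) has_vector_derivative sc a (A x)) (at 0)"
      using s.has_vector_derivative[OF der[of x]] .
    moreover have "(\<lambda>t. T t (sc a x)) = (\<lambda>t. sc a (T t x))" by (simp add: Tsc)
    ultimately show ?thesis using der[of "sc a x"] vector_derivative_unique_at by metis
  qed
  then show "\<And>a x. A (sc a x) = sc a (A x)" .
  have AR: "A (r *\<^sub>R x) = r *\<^sub>R A x" for r x
    using Asc[of "complex_of_real r" x] H unfolding complex_hilbert_def by simp
  \<comment> \<open>boundedness via Baire\<close>
  define E where "E n = {x. \<forall>t\<in>{-1..1}. norm (T t x - x) \<le> real n * \<bar>t\<bar>}" for n :: nat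
  have Eclosed: "closed (E n)" for n
  proof -
    have "E n = (\<Inter>t\<in>{-1..1}. {x. norm (T t x - x) \<le> real n * \<bar>t\<bar>})" by (auto simp: E_def)
    moreover have "closed {x. norm (T t x - x) \<le> real n * \<bar>t\<bar>}" for t
    proof -
      have "continuous_on UNIV (\<lambda>x. norm (T t x - x))"
        by (intro continuous_on_norm continuous_on_diff linear_continuous_on[OF Tbl] continuous_on_id)
      then show ?thesis by (rule closed_Collect_le[OF _ continuous_on_const])
    qed
    ultimately show ?thesis by auto
  qed
  have Ecover: "\<exists>n. x \<in> E n" for x
  proof -
    have q: "((\<lambda>h. inverse h *\<^sub>R (T h x - x)) \<longlongrightarrow> A x) (at 0)"
      using der[of x] by (simp add: vderiv_iff_quot T0)
    then have "\<forall>\<^sub>F h in at 0. norm (inverse h *\<^sub>R (T h x - x)) < norm (A x) + 1"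
      by (rule order_tendstoD(2)[OF tendsto_norm]) simp
    then obtain d where d: "d > 0" and dd: "\<And>h. h \<noteq> 0 \<Longrightarrow> dist h 0 < d \<Longrightarrow> norm (inverse h *\<^sub>R (T h x - x)) < norm (A x) + 1"
      unfolding eventually_at by auto
    have "compact ((\<lambda>t. T t x - x) ` {-1..1})"
      by (rule compact_continuous_image) (auto intro!: continuous_intros continuous_on_subset[OF Tcont])
    then obtain M where M: "\<And>t. t \<in> {-1..1} \<Longrightarrow> norm (T t x - x) \<le> M"
      using compact_imp_bounded bounded_iff by (metis image_eqI)
    obtain n :: nat where n: "max (norm (A x) + 1) (M / d) < real n" using reals_Archimedean2 by blast
    have "norm (T t x - x) \<le> real n * \<bar>t\<bar>" if t: "t \<in> {-1..1}" for t
    proof (cases "t = 0")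
      case True then show ?thesis by (simp add: T0)
    next
      case False
      show ?thesis
      proof (cases "\<bar>t\<bar> < d")
        case True
        then have "norm (inverse t *\<^sub>R (T t x - x)) < norm (A x) + 1" using dd False by simp
        then have "norm (T t x - x) / \<bar>t\<bar> < norm (A x) + 1" by (simp add: divide_inverse_commute)
        then have "norm (T t x - x) < (norm (A x) + 1) * \<bar>t\<bar>" using False by (simp add: divide_less_eq)
        also have "\<dots> \<le> real n * \<bar>t\<bar>" using n by (intro mult_right_mono) auto
        finally show ?thesis by simp
      next
        case False
        have "M / d \<le> real n" using n by simp
        then have "M \<le> real n * d" using d by (simp add: divide_le_eq)
        also have "\<dots> \<le> real n * \<bar>t\<bar>" using False by (intro mult_left_mono) auto
        finally show ?thesis using M[OF t] by simp
      qed
    qed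
    then show ?thesis unfolding E_def by blast
  qed
  have "\<exists>n. interior (E n) \<noteq> {}"
  proof (rule ccontr)
    assume "\<not> ?thesis"
    then have "euclidean interior_of \<Union>(range E) = {}"
      by (intro Baire_category_alt) (auto simp: completely_metrizable_space_euclidean Eclosed)
    moreover have "\<Union>(range E) = UNIV" using Ecover by blast
    ultimately show False by simp
  qed
  then obtain n z where "z \<in> interior (E n)" by blast
  then obtain r where r: "r > 0" and rb: "ball z r \<subseteq> E n" using mem_interior by blast
  have small: "norm (A y) \<le> 2 * real n" if y: "norm y < r" for y
  proof -
    have zy: "z + y \<in> E n" "z \<in> E n" using rb y r by (auto simp: dist_norm)
    have bnd: "norm (T t y - y) \<le> 2 * real n * \<bar>t\<bar>" if "t \<in> {-1..1}" for t
    proof -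
      have "T t y - y = (T t (z + y) - (z + y)) - (T t z - z)"
        using Tbl[of t] by (simp add: linear_simps)
      then have "norm (T t y - y) \<le> norm (T t (z + y) - (z + y)) + norm (T t z - z)"
        by (metis norm_triangle_ineq4)
      also have "\<dots> \<le> real n * \<bar>t\<bar> + real n * \<bar>t\<bar>" using zy that unfolding E_def
        by (intro add_mono) auto
      finally show ?thesis by (simp add: algebra_simps)
    qed
    have q: "((\<lambda>h. norm (inverse h *\<^sub>R (T h y - y))) \<longlongrightarrow> norm (A y)) (at 0)"
      using der[of y] by (intro tendsto_norm) (simp add: vderiv_iff_quot T0)
    have "\<forall>\<^sub>F h in at (0::real). \<bar>h\<bar> < 1 \<and> h \<noteq> 0"
      using eventually_at_ball'[of 1 "0::real" UNIV] by (auto simp: dist_real_def elim: eventually_mono)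
    then have "\<forall>\<^sub>F h in at (0::real). norm (inverse h *\<^sub>R (T h y - y)) \<le> 2 * real n"
    proof (rule eventually_mono)
      fix h :: real assume h: "\<bar>h\<bar> < 1 \<and> h \<noteq> 0"
      then have "h \<in> {-1..1}" by auto
      then have "norm (T h y - y) \<le> 2 * real n * \<bar>h\<bar>" by (rule bnd)
      then have "inverse \<bar>h\<bar> * norm (T h y - y) \<le> 2 * real n"
        using h by (simp add: field_simps)
      moreover have "norm (inverse h *\<^sub>R (T h y - y)) = inverse \<bar>h\<bar> * norm (T h y - y)"
        by (simp only: norm_scaleR abs_inverse)
      ultimately show "norm (inverse h *\<^sub>R (T h y - y)) \<le> 2 * real n" by simp
    qed
    then show ?thesis using tendsto_upperbound[OF q] by simp
  qed
  show "bounded_linear A"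
  proof (rule bounded_linear_intro[where K="4 * real n / r"])
    show "A (x + y) = A x + A y" for x y by (rule Aadd)
    show "A (c *\<^sub>R x) = c *\<^sub>R A x" for c x by (rule AR)
    show "norm (A x) \<le> norm x * (4 * real n / r)" for x
    proof (cases "x = 0")
      case True then show ?thesis using AR[of 0 0] by simp
    next
      case False
      define c where "c = r / (2 * norm x)"
      have c: "c > 0" using False r by (simp add: c_def)
      have "norm (c *\<^sub>R x) < r" using False r by (simp add: c_def)
      then have "norm (A (c *\<^sub>R x)) \<le> 2 * real n" by (rule small)
      then have "c * norm (A x) \<le> 2 * real n" using c by (simp add: AR)
      then have "norm (A x) \<le> 2 * real n / c" using c by (simp add: field_simps)
      also have "2 * real n / c = norm x * (4 * real n / r)" using False r by (simp add: c_def field_simps)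
      finally show ?thesis .
    qed
  qed
qed

lemma perturb_inv:
  fixes X0 Xi De :: "'k::banach \<Rightarrow> 'k"
  assumes bX0: "bounded_linear X0" and bXi: "bounded_linear Xi" and bDe: "bounded_linear De"
    and l: "\<And>u. Xi (X0 u) = u" and r: "\<And>u. X0 (Xi u) = u"
    and k: "onorm Xi * onorm De < 1"
  shows "\<exists>Y. bounded_linear Y \<and> (\<forall>u. Y (X0 u + De u) = u) \<and> (\<forall>u. X0 (Y u) + De (Y u) = u)"
proof -
  interpret X0: bounded_linear X0 by (rule bX0)
  interpret Xi: bounded_linear Xi by (rule bXi)
  interpret De: bounded_linear De by (rule bDe)
  define c where "c = onorm Xi * onorm De"
  have c0: "0 \<le> c" unfolding c_def using onorm_pos_le[OF bXi] onorm_pos_le[OF bDe] by simp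
  have c1: "c < 1" using k c_def by simp
  have XiDe: "norm (Xi (De w)) \<le> c * norm w" for w
  proof -
    have "norm (Xi (De w)) \<le> onorm Xi * norm (De w)" by (rule onorm[OF bXi])
    also have "\<dots> \<le> onorm Xi * (onorm De * norm w)"
      by (rule mult_left_mono[OF onorm[OF bDe] onorm_pos_le[OF bXi]])
    finally show ?thesis by (simp add: c_def mult.assoc)
  qed
  let ?X = "\<lambda>u. X0 u + De u"
  have eqv: "?X u = y \<longleftrightarrow> u = Xi y - Xi (De u)" for u y
  proof
    assume "?X u = y"
    then have "Xi (?X u) = Xi y" by simp
    then show "u = Xi y - Xi (De u)" by (simp add: Xi.add l eq_diff_eq)
  next
    assume "u = Xi y - Xi (De u)"
    then have "X0 u = X0 (Xi y - Xi (De u))" by simp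
    then show "?X u = y" by (simp add: X0.diff r)
  qed
  have ex: "\<exists>u. ?X u = y" for y
  proof -
    have "\<exists>!u. Xi y - Xi (De u) = u"
    proof (rule banach_fix_type[OF c0 c1], intro allI)
      fix u v
      have "Xi y - Xi (De u) - (Xi y - Xi (De v)) = Xi (De (v - u))" by (simp add: Xi.diff De.diff)
      then have "dist (Xi y - Xi (De u)) (Xi y - Xi (De v)) = norm (Xi (De (v - u)))" by (simp add: dist_norm)
      also have "\<dots> \<le> c * norm (v - u)" by (rule XiDe)
      finally show "dist (Xi y - Xi (De u)) (Xi y - Xi (De v)) \<le> c * dist u v" by (simp add: dist_norm norm_minus_commute)
    qed
    then show ?thesis using eqv by metis
  qed
  have inj: "?X u = ?X v \<Longrightarrow> u = v" for u v
  proof -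
    assume "?X u = ?X v"
    then have "?X (u - v) = 0" by (simp add: X0.diff De.diff algebra_simps)
    then have w: "u - v = Xi 0 - Xi (De (u - v))" using eqv by blast
    then have "norm (u - v) = norm (Xi (De (u - v)))" by (metis Xi.zero diff_0 norm_minus_cancel)
    also have "\<dots> \<le> c * norm (u - v)" by (rule XiDe)
    finally have "(1 - c) * norm (u - v) \<le> 0" by (simp add: algebra_simps)
    then have "norm (u - v) \<le> 0" using c1 by (simp add: mult_le_0_iff)
    then show "u = v" by simp
  qed
  define Y where "Y y = (THE u. ?X u = y)" for y
  have XY: "?X (Y y) = y" for y
  proof -
    have "\<exists>!u. ?X u = y" using ex inj by blast
    then show ?thesis unfolding Y_def by (rule theI')
  qed
  have YX: "Y (?X u) = u" for u by (rule inj) (rule XY)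
  have bnd: "norm (Y y) \<le> norm y * (onorm Xi / (1 - c))" for y
  proof -
    have "Y y = Xi y - Xi (De (Y y))" using eqv XY by blast
    then have "norm (Y y) \<le> norm (Xi y) + norm (Xi (De (Y y)))" by (metis norm_triangle_ineq4)
    also have "\<dots> \<le> onorm Xi * norm y + c * norm (Y y)" by (intro add_mono onorm[OF bXi] XiDe)
    finally have "(1 - c) * norm (Y y) \<le> onorm Xi * norm y" by (simp add: algebra_simps)
    then show ?thesis using c1 by (simp add: field_simps)
  qed
  have "bounded_linear Y"
  proof (rule bounded_linear_intro[OF _ _ bnd])
    fix a b :: 'k and s :: real
    have "?X (Y a + Y b) = a + b" using XY by (simp add: X0.add De.add algebra_simps)
    then have "Y (a + b) = Y (?X (Y a + Y b))" by simp
    then show "Y (a + b) = Y a + Y b" by (simp only: YX)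
    have "?X (s *\<^sub>R Y a) = s *\<^sub>R a" using XY[of a] by (simp add: X0.scaleR De.scaleR flip: scaleR_add_right)
    then have "Y (s *\<^sub>R a) = Y (?X (s *\<^sub>R Y a))" by simp
    then show "Y (s *\<^sub>R a) = s *\<^sub>R Y a" by (simp only: YX)
  qed
  then show ?thesis using XY YX by blast
qed

theorem mainTheorem7:
  fixes sc :: "complex \<Rightarrow> 'k::banach \<Rightarrow> 'k"
    and ip kf :: "'k \<Rightarrow> 'k \<Rightarrow> complex"
    and D :: "'k set" and A A\<zeta> :: "'k \<Rightarrow> 'k"
    and \<sigma>1 \<sigma>2 \<gamma> :: "complex^2^2"
    and C0 :: "'k \<Rightarrow> complex^2" and X0 :: "'k \<Rightarrow> 'k" and B0 :: "complex^2 \<Rightarrow> 'k"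
    and x0 :: real
  assumes "krein_space sc ip kf"
    and "invertible \<sigma>1" and "madj \<sigma>1 = \<sigma>1"
    and "invertible_node sc D A A\<zeta> \<sigma>1 C0 X0 B0"
    and "\<exists>T. group_generator sc D A T \<and> analytic_semigroup sc T"
    and "\<exists>T. group_generator sc D A\<zeta> T \<and> analytic_semigroup sc T"
    and "madj \<sigma>2 = \<sigma>2" and "madj \<gamma> = - \<gamma>"
  shows "\<exists>a b C X B. a < x0 \<and> x0 < b \<and>
           vessel sc D A A\<zeta> \<sigma>1 \<sigma>2 \<gamma> {a<..<b} C X B \<and>
           C x0 = C0 \<and> X x0 = X0 \<and> B x0 = B0"
proof -
  have H: "complex_hilbert sc ip" using assms(1) unfolding krein_space_def by blast
  have scbl: "bounded_linear (sc a)" for a by (rule sc_bl[OF H])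
  have node0: "node sc D A A\<zeta> \<sigma>1 C0 X0 B0" using assms(4) unfolding invertible_node_def by blast
  obtain Xi0 where Xi0: "cblin sc sc Xi0" "\<And>u. Xi0 (X0 u) = u" "\<And>u. X0 (Xi0 u) = u"
    using assms(4) unfolding invertible_node_def by blast
  have bXi0: "bounded_linear Xi0" using Xi0(1) unfolding cblin_def by blast
  note nd = node0[unfolded node_def]
  have ndC: "cblin sc cv C0" using nd by (rule conjunct1)
  have ndX: "cblin sc sc X0" using nd[THEN conjunct2] by (rule conjunct1)
  have ndB: "cblin cv sc B0" using nd[THEN conjunct2, THEN conjunct2] by (rule conjunct1)
  have grA: "\<exists>T. group_generator sc D A T" using nd[THEN conjunct2, THEN conjunct2, THEN conjunct2] by (rule conjunct1)
  have grZ: "\<exists>T. group_generator sc D A\<zeta> T" using nd[THEN conjunct2, THEN conjunct2, THEN conjunct2, THEN conjunct2] by (rule conjunct1)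
  have lyapA: "\<forall>u\<in>D. A (X0 u) + X0 (A\<zeta> u) + B0 (\<sigma>1 *v C0 u) = 0"
    using nd[THEN conjunct2, THEN conjunct2, THEN conjunct2, THEN conjunct2, THEN conjunct2, THEN conjunct2, THEN conjunct2] .
  have lyap0: "\<And>u. u \<in> D \<Longrightarrow> A (X0 u) + X0 (A\<zeta> u) + B0 (\<sigma>1 *v C0 u) = 0" using lyapA by (rule bspec)
  have bC0: "bounded_linear C0" using ndC unfolding cblin_def by (rule conjunct1)
  have C0sc: "\<And>a u. C0 (sc a u) = a *s C0 u" using ndC unfolding cblin_def by (elim conjE allE)
  have bX0: "bounded_linear X0" using ndX unfolding cblin_def by (rule conjunct1)
  have X0sc: "\<And>a u. X0 (sc a u) = sc a (X0 u)" using ndX unfolding cblin_def by (elim conjE allE)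
  have bB0: "bounded_linear B0" using ndB unfolding cblin_def by (rule conjunct1)
  have B0sc: "\<And>a e. B0 (a *s e) = sc a (B0 e)" using ndB unfolding cblin_def by (elim conjE allE)
  obtain TA where TA: "group_generator sc D A TA" "analytic_semigroup sc TA" using assms(5) by blast
  obtain TZ where TZ: "group_generator sc D A\<zeta> TZ" "analytic_semigroup sc TZ" using assms(6) by blast
  have DU: "D = UNIV" and bA: "bounded_linear A" and Asc: "\<And>a x. A (sc a x) = sc a (A x)"
    using gen_facts[OF H TA] by blast+
  have bZ: "bounded_linear A\<zeta>" and Zsc: "\<And>a x. A\<zeta> (sc a x) = sc a (A\<zeta> x)"
    using gen_facts[OF H TZ] by blast+
  define Si where "Si = matrix_inv \<sigma>1"
  have inv1: "\<sigma>1 ** Si = mat 1 \<and> Si ** \<sigma>1 = mat 1"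
    using assms(2) unfolding invertible_def Si_def matrix_inv_def by (rule someI_ex)
  have s1a: "\<sigma>1 *v (Si *v v) = v" for v using inv1 by (simp add: matrix_vector_mul_assoc)
  have s1b: "Si *v (\<sigma>1 *v v) = v" for v using inv1 by (simp add: matrix_vector_mul_assoc)
  define mb :: "complex^2^2 \<Rightarrow> (complex^2) \<Rightarrow>\<^sub>L (complex^2)" where "mb M = Blinfun ((*v) M)" for M
  have mb_apply[simp]: "blinfun_apply (mb M) v = M *v v" for M v
    unfolding mb_def by (simp add: bounded_linear_Blinfun_apply)
  define Ab where "Ab = Blinfun A"
  define Zb where "Zb = Blinfun A\<zeta>"
  have Ab_apply[simp]: "blinfun_apply Ab v = A v" for v unfolding Ab_def using bA by (simp add: bounded_linear_Blinfun_apply)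
  have Zb_apply[simp]: "blinfun_apply Zb v = A\<zeta> v" for v unfolding Zb_def using bZ by (simp add: bounded_linear_Blinfun_apply)
  define LBf :: "((complex^2) \<Rightarrow>\<^sub>L 'k) \<Rightarrow> ((complex^2) \<Rightarrow>\<^sub>L 'k)"
    where "LBf B = - (Ab o\<^sub>L B o\<^sub>L mb (\<sigma>2 ** Si)) - (B o\<^sub>L mb (\<gamma> ** Si))" for B
  define LCf :: "('k \<Rightarrow>\<^sub>L (complex^2)) \<Rightarrow> ('k \<Rightarrow>\<^sub>L (complex^2))"
    where "LCf C = mb Si o\<^sub>L (- (mb \<sigma>2 o\<^sub>L C o\<^sub>L Zb) + (mb \<gamma> o\<^sub>L C))" for C
  interpret bbc: bounded_bilinear "(o\<^sub>L) :: ('k \<Rightarrow>\<^sub>L 'k) \<Rightarrow> ((complex^2) \<Rightarrow>\<^sub>L 'k) \<Rightarrow> _"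
    by (rule bounded_bilinear_blinfun_compose)
  have blLB: "bounded_linear LBf"
    unfolding LBf_def
    by (intro bounded_linear_sub bounded_linear_minus
        bounded_linear_compose[OF bounded_bilinear.bounded_linear_left[OF bounded_bilinear_blinfun_compose]]
        bounded_linear_compose[OF bounded_bilinear.bounded_linear_right[OF bounded_bilinear_blinfun_compose]]
        bounded_linear_ident)
  have blLC: "bounded_linear LCf"
    unfolding LCf_def
    by (intro bounded_linear_add bounded_linear_minus
        bounded_linear_compose[OF bounded_bilinear.bounded_linear_left[OF bounded_bilinear_blinfun_compose]]
        bounded_linear_compose[OF bounded_bilinear.bounded_linear_right[OF bounded_bilinear_blinfun_compose]]
        bounded_linear_ident)
  define LB where "LB = Blinfun LBf"
  define LC where "LC = Blinfun LCf"
  have LB_apply[simp]: "blinfun_apply LB B = LBf B" for B unfolding LB_def using blLB by (simp add: bounded_linear_Blinfun_apply)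
  have LC_apply[simp]: "blinfun_apply LC C = LCf C" for C unfolding LC_def using blLC by (simp add: bounded_linear_Blinfun_apply)
  define PB :: "((complex^2) \<Rightarrow>\<^sub>L 'k) set" where "PB = {B. \<forall>a e. blinfun_apply B (a *s e) = sc a (blinfun_apply B e)}"
  define PC :: "('k \<Rightarrow>\<^sub>L (complex^2)) set" where "PC = {C. \<forall>a u. blinfun_apply C (sc a u) = a *s blinfun_apply C u}"
  have sc_add: "sc a (x + y) = sc a x + sc a y" and sc_minus: "sc a (- x) = - sc a x"
    and sc_diff: "sc a (x - y) = sc a x - sc a y" for a x y
    using scbl[of a] by (simp_all add: linear_simps)
  have sc_scaleR: "sc a (r *\<^sub>R x) = r *\<^sub>R sc a x" for a r x using scbl[of a] by (simp add: linear_simps)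
  have closedPB: "closed PB"
  proof -
    have "PB = (\<Inter>a. \<Inter>e. {B. blinfun_apply B (a *s e) = sc a (blinfun_apply B e)})" by (auto simp: PB_def)
    moreover have "closed {B :: (complex^2) \<Rightarrow>\<^sub>L 'k. blinfun_apply B (a *s e) = sc a (blinfun_apply B e)}" for a e
      by (rule closed_Collect_eq[OF linear_continuous_on[OF blinfun.bounded_linear_left]
          linear_continuous_on[OF bounded_linear_compose[OF scbl blinfun.bounded_linear_left]]])
    ultimately show ?thesis by auto
  qed
  have closedPC: "closed PC"
  proof -
    have "PC = (\<Inter>a. \<Inter>u. {C. blinfun_apply C (sc a u) = a *s (blinfun_apply C u)})" by (auto simp: PC_def)
    moreover have "closed {C :: 'k \<Rightarrow>\<^sub>L (complex^2). blinfun_apply C (sc a u) = a *s (blinfun_apply C u)}" for a u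
    proof -
      have "(\<lambda>v::complex^2. a *s v) = (\<lambda>v. (mat a :: complex^2^2) *v v)"
        by (rule ext) (simp add: vec_eq_iff matrix_vector_mult_def mat_def if_distrib if_distribR sum.delta cong del: if_weak_cong)
      then have that: "bounded_linear (\<lambda>v::complex^2. a *s v)"
        using matrix_vector_mul_bounded_linear[of "mat a :: complex^2^2"] by simp
      show ?thesis
        by (rule closed_Collect_eq[OF linear_continuous_on[OF blinfun.bounded_linear_left]
          linear_continuous_on[OF bounded_linear_compose[OF that blinfun.bounded_linear_left]]])
    qed
    ultimately show ?thesis by auto
  qed
  have B0P: "Blinfun B0 \<in> PB" unfolding PB_def using bB0 B0sc by (simp add: bounded_linear_Blinfun_apply)
  have C0P: "Blinfun C0 \<in> PC" unfolding PC_def using bC0 C0sc by (simp add: bounded_linear_Blinfun_apply)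
  have PBadd: "x + y \<in> PB" if "x \<in> PB" "y \<in> PB" for x y
    using that by (simp add: PB_def blinfun.bilinear_simps sc_add)
  have PBscale: "r *\<^sub>R x \<in> PB" if "x \<in> PB" for r x
    using that by (simp add: PB_def blinfun.bilinear_simps sc_scaleR)
  have PCadd: "x + y \<in> PC" if "x \<in> PC" "y \<in> PC" for x y
    using that by (simp add: PC_def blinfun.bilinear_simps vector_add_ldistrib)
  have scs: "r *\<^sub>R (a *s v) = a *s (r *\<^sub>R (v::complex^2))" for r a v
    by (simp add: vec_eq_iff scaleR_conv_of_real mult_ac)
  have PCscale: "r *\<^sub>R x \<in> PC" if "x \<in> PC" for r x
    using that by (simp add: PC_def blinfun.bilinear_simps scs)
  have PBL: "LB x \<in> PB" if "x \<in> PB" for x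
    using that by (simp add: PB_def LBf_def blinfun.bilinear_simps vector_scalar_commute Asc sc_add sc_minus sc_diff
         flip: matrix_vector_mul_assoc)
  have PCL: "LC x \<in> PC" if "x \<in> PC" for x
    using that by (simp add: PC_def LCf_def blinfun.bilinear_simps vector_scalar_commute Zsc
         vector_add_ldistrib vector_smult_rneg)
  obtain yB where yB0: "yB x0 = Blinfun B0" and yBd: "\<And>t. (yB has_vector_derivative LB (yB t)) (at t)"
    and yBP: "\<And>t. yB t \<in> PB"
    using lin_ode_exists[OF closedPB B0P PBadd PBscale PBL, of x0] by blast
  obtain yC where yC0: "yC x0 = Blinfun C0" and yCd: "\<And>t. (yC has_vector_derivative LC (yC t)) (at t)"
    and yCP: "\<And>t. yC t \<in> PC"
    using lin_ode_exists[OF closedPC C0P PCadd PCscale PCL, of x0] by blast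
  define Q where "Q t = yB t o\<^sub>L mb \<sigma>2 o\<^sub>L yC t" for t
  have contB: "continuous_on UNIV yB"
    using yBd has_vector_derivative_continuous continuous_at_imp_continuous_on by blast
  have contC: "continuous_on UNIV yC"
    using yCd has_vector_derivative_continuous continuous_at_imp_continuous_on by blast
  have contQ: "continuous_on UNIV Q" unfolding Q_def
    by (intro continuous_intros contB contC)
  obtain yX where yX0: "yX x0 = Blinfun X0" and yXd: "\<And>t. (yX has_vector_derivative Q t) (at t)"
    using primitive_exists[OF contQ, of x0 "Blinfun X0"] by blast
  have Q_apply: "blinfun_apply (Q t) u = yB t (\<sigma>2 *v yC t u)" for t u by (simp add: Q_def)
  have pB: "\<And>a e. blinfun_apply (yB t) (a *s e) = sc a (blinfun_apply (yB t) e)" for t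
    using yBP[of t] unfolding PB_def by blast
  have pC: "\<And>a u. blinfun_apply (yC t) (sc a u) = a *s blinfun_apply (yC t) u" for t
    using yCP[of t] unfolding PC_def by blast
  have X0a: "blinfun_apply (yX x0) = X0" using yX0 bX0 by (simp add: bounded_linear_Blinfun_apply)
  have B0a: "blinfun_apply (yB x0) = B0" using yB0 bB0 by (simp add: bounded_linear_Blinfun_apply)
  have C0a: "blinfun_apply (yC x0) = C0" using yC0 bC0 by (simp add: bounded_linear_Blinfun_apply)
  define Phi where "Phi t = (Ab o\<^sub>L yX t) + (yX t o\<^sub>L Zb) + (yB t o\<^sub>L mb \<sigma>1 o\<^sub>L yC t)" for t
  have Phid: "(Phi has_vector_derivative 0) (at t)" for t
  proof -
    have d1: "((\<lambda>t. Ab o\<^sub>L yX t) has_vector_derivative Ab o\<^sub>L Q t) (at t)"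
      by (rule bounded_linear.has_vector_derivative[OF bounded_bilinear.bounded_linear_right[OF bounded_bilinear_blinfun_compose] yXd])
    have d2: "((\<lambda>t. yX t o\<^sub>L Zb) has_vector_derivative Q t o\<^sub>L Zb) (at t)"
      by (rule bounded_linear.has_vector_derivative[OF bounded_bilinear.bounded_linear_left[OF bounded_bilinear_blinfun_compose] yXd])
    have d3a: "((\<lambda>t. yB t o\<^sub>L mb \<sigma>1) has_vector_derivative LB (yB t) o\<^sub>L mb \<sigma>1) (at t)"
      by (rule bounded_linear.has_vector_derivative[OF bounded_bilinear.bounded_linear_left[OF bounded_bilinear_blinfun_compose] yBd])
    have d3: "((\<lambda>t. (yB t o\<^sub>L mb \<sigma>1) o\<^sub>L yC t) has_vector_derivative
        ((yB t o\<^sub>L mb \<sigma>1) o\<^sub>L LC (yC t)) + ((LB (yB t) o\<^sub>L mb \<sigma>1) o\<^sub>L yC t)) (at t)"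
      by (rule bounded_bilinear.has_vector_derivative[OF bounded_bilinear_blinfun_compose d3a yCd])
    have "(Phi has_vector_derivative ((Ab o\<^sub>L Q t) + (Q t o\<^sub>L Zb) +
        (((yB t o\<^sub>L mb \<sigma>1) o\<^sub>L LC (yC t)) + ((LB (yB t) o\<^sub>L mb \<sigma>1) o\<^sub>L yC t)))) (at t)"
      unfolding Phi_def by (intro has_vector_derivative_add d1 d2 d3)
    moreover have "(Ab o\<^sub>L Q t) + (Q t o\<^sub>L Zb) +
        (((yB t o\<^sub>L mb \<sigma>1) o\<^sub>L LC (yC t)) + ((LB (yB t) o\<^sub>L mb \<sigma>1) o\<^sub>L yC t)) = 0"
      by (rule blinfun_eqI)
         (simp add: Q_def LBf_def LCf_def blinfun.bilinear_simps s1a s1b flip: matrix_vector_mul_assoc)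
    ultimately show ?thesis by simp
  qed
  have Phi0: "Phi x0 = 0"
    by (rule blinfun_eqI) (simp add: Phi_def X0a B0a C0a lyap0 DU blinfun.bilinear_simps)
  have lyap: "A (yX t u) + yX t (A\<zeta> u) + yB t (\<sigma>1 *v yC t u) = 0" for t u
  proof -
    have "Phi t = 0" using zero_deriv_const[OF Phid, of t x0] Phi0 by simp
    then have "blinfun_apply (Phi t) u = 0" by simp
    then show ?thesis by (simp add: Phi_def blinfun.bilinear_simps)
  qed
  have Xsc: "yX t (sc a u) = sc a (yX t u)" for t a u
  proof -
    define Sb where "Sb = Blinfun (sc a)"
    have Sb_apply[simp]: "blinfun_apply Sb v = sc a v" for v
      unfolding Sb_def using scbl[of a] by (simp add: bounded_linear_Blinfun_apply)
    define Psi where "Psi t = (yX t o\<^sub>L Sb) - (Sb o\<^sub>L yX t)" for t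
    have "(Psi has_vector_derivative 0) (at t)" for t
    proof -
      have "(Psi has_vector_derivative ((Q t o\<^sub>L Sb) - (Sb o\<^sub>L Q t))) (at t)"
        unfolding Psi_def
        by (intro has_vector_derivative_diff
          bounded_linear.has_vector_derivative[OF bounded_bilinear.bounded_linear_left[OF bounded_bilinear_blinfun_compose] yXd]
          bounded_linear.has_vector_derivative[OF bounded_bilinear.bounded_linear_right[OF bounded_bilinear_blinfun_compose] yXd])
      moreover have "(Q t o\<^sub>L Sb) - (Sb o\<^sub>L Q t) = 0"
        by (rule blinfun_eqI) (simp add: Q_def blinfun.bilinear_simps pC pB vector_scalar_commute)
      ultimately show ?thesis by simp
    qed
    moreover have "Psi x0 = 0"
      by (rule blinfun_eqI) (simp add: Psi_def X0a X0sc blinfun.bilinear_simps)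
    ultimately have "Psi t = 0" using zero_deriv_const by metis
    then have "blinfun_apply (Psi t) u = 0" by simp
    then show ?thesis by (simp add: Psi_def blinfun.bilinear_simps)
  qed
  have contX: "(yX \<longlongrightarrow> yX x0) (at x0)"
    using yXd[of x0] has_vector_derivative_continuous continuous_at by blast
  define K where "K = onorm Xi0 + 1"
  have K: "K > 0" using onorm_pos_le[OF bXi0] by (simp add: K_def)
  then have "\<forall>\<^sub>F t in at x0. dist (yX t) (yX x0) < 1 / K"
    using contX[unfolded tendsto_iff] K by simp
  then obtain \<delta> where \<delta>: "\<delta> > 0" and \<delta>d: "\<And>t. t \<noteq> x0 \<Longrightarrow> dist t x0 < \<delta> \<Longrightarrow> dist (yX t) (yX x0) < 1 / K"
    unfolding eventually_at by auto
  have invX: "\<exists>Y. cblin sc sc Y \<and> (\<forall>u. Y (yX t u) = u) \<and> (\<forall>u. yX t (Y u) = u)"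
    if t: "t \<in> {x0 - \<delta><..<x0 + \<delta>}" for t
  proof -
    have nd: "norm (yX t - yX x0) < 1 / K"
    proof (cases "t = x0")
      case True then show ?thesis using K by simp
    next
      case False then show ?thesis using \<delta>d[of t] t by (simp add: dist_norm abs_less_iff)
    qed
    define De where "De = blinfun_apply (yX t - yX x0)"
    have onDe: "onorm De = norm (yX t - yX x0)" by (simp add: De_def norm_blinfun.rep_eq)
    have "onorm Xi0 * onorm De \<le> onorm Xi0 * (1 / K)"
      using nd onDe onorm_pos_le[OF bXi0] by (intro mult_left_mono) auto
    also have "\<dots> < 1" using K by (simp add: K_def)
    finally have k: "onorm Xi0 * onorm De < 1" .
    obtain Y where Y: "bounded_linear Y" "\<And>u. Y (X0 u + De u) = u" "\<And>u. X0 (Y u) + De (Y u) = u"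
      using perturb_inv[OF bX0 bXi0 _ Xi0(2) Xi0(3) k] unfolding De_def by (blast intro: blinfun.bounded_linear_right)
    have XDe: "X0 u + De u = yX t u" for u by (simp add: De_def X0a blinfun.bilinear_simps)
    have Yl: "Y (yX t u) = u" for u using Y(2)[of u] XDe by simp
    have Yr: "yX t (Y u) = u" for u using Y(3)[of u] XDe by simp
    have "Y (sc a u) = sc a (Y u)" for a u
    proof -
      have "yX t (sc a (Y u)) = sc a u" by (simp add: Xsc Yr)
      then show ?thesis using Yl by metis
    qed
    then show ?thesis using Y(1) Yl Yr unfolding cblin_def by blast
  qed
  have nodeall: "node sc D A A\<zeta> \<sigma>1 (yC t) (yX t) (yB t)" for t
    unfolding node_def cblin_def
    using grA grZ pB pC Xsc lyap by (simp add: DU blinfun.bounded_linear_right)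
  have Bder: "\<exists>B'. op_has_deriv (\<lambda>t. blinfun_apply (yB t)) B' x \<and>
        (\<forall>e. B' e = - (A (yB x (\<sigma>2 *v (matrix_inv \<sigma>1 *v e))) + yB x (\<gamma> *v (matrix_inv \<sigma>1 *v e))))" for x
  proof (intro exI conjI allI)
    show "op_has_deriv (\<lambda>t. blinfun_apply (yB t)) (blinfun_apply (LB (yB x))) x"
      by (rule op_deriv_of_blinfun[OF yBd])
    show "blinfun_apply (LB (yB x)) e = - (A (yB x (\<sigma>2 *v (matrix_inv \<sigma>1 *v e))) + yB x (\<gamma> *v (matrix_inv \<sigma>1 *v e)))" for e
      by (simp add: LBf_def blinfun.bilinear_simps Si_def flip: matrix_vector_mul_assoc)
  qed
  have Cder: "\<exists>C'. op_has_deriv (\<lambda>t. blinfun_apply (yC t)) C' x \<and>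
        (\<forall>u\<in>D. C' u = matrix_inv \<sigma>1 *v (- (\<sigma>2 *v yC x (A\<zeta> u)) + \<gamma> *v yC x u))" for x
  proof (intro exI conjI ballI)
    show "op_has_deriv (\<lambda>t. blinfun_apply (yC t)) (blinfun_apply (LC (yC x))) x"
      by (rule op_deriv_of_blinfun[OF yCd])
    show "blinfun_apply (LC (yC x)) u = matrix_inv \<sigma>1 *v (- (\<sigma>2 *v yC x (A\<zeta> u)) + \<gamma> *v yC x u)" for u
      by (simp add: LCf_def blinfun.bilinear_simps Si_def matrix_vector_mult_diff_distrib)
  qed
  have Xder: "op_has_deriv (\<lambda>t. blinfun_apply (yX t)) (\<lambda>u. yB x (\<sigma>2 *v yC x u)) x" for x
  proof -
    have "blinfun_apply (Q x) = (\<lambda>u. yB x (\<sigma>2 *v yC x u))" by (rule ext) (simp add: Q_apply)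
    then show ?thesis using op_deriv_of_blinfun[OF yXd, of x] by simp
  qed
  show ?thesis
  proof (rule exI[where x="x0 - \<delta>"], rule exI[where x="x0 + \<delta>"],
      rule exI[where x="\<lambda>t. blinfun_apply (yC t)"], rule exI[where x="\<lambda>t. blinfun_apply (yX t)"],
      rule exI[where x="\<lambda>t. blinfun_apply (yB t)"], intro conjI)
    show "x0 - \<delta> < x0" "x0 < x0 + \<delta>" using \<delta> by auto
    show "blinfun_apply (yC x0) = C0" by (rule C0a)
    show "blinfun_apply (yX x0) = X0" by (rule X0a)
    show "blinfun_apply (yB x0) = B0" by (rule B0a)
    show "vessel sc D A A\<zeta> \<sigma>1 \<sigma>2 \<gamma> {x0 - \<delta><..<x0 + \<delta>} (\<lambda>t. blinfun_apply (yC t))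
        (\<lambda>t. blinfun_apply (yX t)) (\<lambda>t. blinfun_apply (yB t))"
      unfolding vessel_def prevessel_def invertible_node_def
      using nodeall Bder Cder Xder invX by (simp add: DU)
  qed
qed

end
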